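(* If $X$ satisfies $selSS^*_{cd}(\mathcal{O},\Gamma)$, has countable extent, and $|X|<\mathfrak{b}$, then $X$ is selectively strongly star-Hurewicz.
   Context: All spaces are regular. $St(A,\mathcal{U})=\bigcup\{U\in\mathcal{U}:U\cap A\neq\emptyset\}$. $\mathfrak{b}$ is the bounding number. $X$ has countable extent if every closed discrete subset of $X$ is countable. $selSS^*_{cd}(\mathcal{O},\Gamma)$: for every sequence $(\mathcal{U}_n:n\in\omega)$ of open covers and every sequence $(D_n:n\in\omega)$ of dense subsets of $X$ there are sets $C_n\subseteq D_n$, closed and discrete in $X$, such that every $x\in X$ lies in $St(C_n,\mathcal{U}_n)$ for all but finitely many $n$. $X$ is selectively strongly star-Hurewicz if for every sequence $(\mathcal{U}_n)$ of open covers and every sequence $(D_n)$ of dense subsets there are finite $F_n\subseteq D_n$ such that every $x\in X$ lies in $St(F_n,\mathcal{U}_n)$ for all but finitely many $n$. *)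

theory Defs
  imports "HOL-Analysis.Analysis"
begin

definition star :: "'a set \<Rightarrow> 'a set set \<Rightarrow> 'a set" where
  "star A \<U> = \<Union>{U \<in> \<U>. U \<inter> A \<noteq> {}}"

definition open_cover :: "'a topology \<Rightarrow> 'a set set \<Rightarrow> bool" where
  "open_cover X \<U> \<longleftrightarrow> (\<forall>U\<in>\<U>. openin X U) \<and> \<Union>\<U> = topspace X"

definition dense_in :: "'a topology \<Rightarrow> 'a set \<Rightarrow> bool" where
  "dense_in X D \<longleftrightarrow> D \<subseteq> topspace X \<and> X closure_of D = topspace X"

definition closed_discrete :: "'a topology \<Rightarrow> 'a set \<Rightarrow> bool" where
  "closed_discrete X C \<longleftrightarrow> closedin X C \<and> subtopology X C = discrete_topology C"

definition countable_extent :: "'a topology \<Rightarrow> bool" where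
  "countable_extent X \<longleftrightarrow> (\<forall>C. closed_discrete X C \<longrightarrow> countable C)"

definition selSS_cd_O_Gamma :: "'a topology \<Rightarrow> bool" where
  "selSS_cd_O_Gamma X \<longleftrightarrow>
    (\<forall>\<U> D. (\<forall>n. open_cover X (\<U> n)) \<and> (\<forall>n. dense_in X (D n)) \<longrightarrow>
      (\<exists>C. (\<forall>n. C n \<subseteq> D n \<and> closed_discrete X (C n)) \<and>
           (\<forall>x\<in>topspace X. \<forall>\<^sub>F n in sequentially. x \<in> star (C n) (\<U> n))))"

definition sel_strongly_star_Hurewicz :: "'a topology \<Rightarrow> bool" where
  "sel_strongly_star_Hurewicz X \<longleftrightarrow>
    (\<forall>\<U> D. (\<forall>n. open_cover X (\<U> n)) \<and> (\<forall>n. dense_in X (D n)) \<longrightarrow>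
      (\<exists>F. (\<forall>n. F n \<subseteq> D n \<and> finite (F n)) \<and>
           (\<forall>x\<in>topspace X. \<forall>\<^sub>F n in sequentially. x \<in> star (F n) (\<U> n))))"

definition dominated_ae :: "(nat \<Rightarrow> nat) \<Rightarrow> (nat \<Rightarrow> nat) \<Rightarrow> bool" where
  "dominated_ae f g \<longleftrightarrow> (\<forall>\<^sub>F n in sequentially. f n \<le> g n)"

definition unbounded_family :: "(nat \<Rightarrow> nat) set \<Rightarrow> bool" where
  "unbounded_family F \<longleftrightarrow> \<not> (\<exists>g. \<forall>f\<in>F. dominated_ae f g)"

text \<open>|A| < b : A has cardinality strictly smaller than every unbounded family.\<close>
definition card_less_b :: "'a set \<Rightarrow> bool" where
  "card_less_b A \<longleftrightarrow> (\<forall>F. unbounded_family F \<longrightarrow> (card_of A, card_of F) \<in> ordLess)"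

end

theory Submission
  imports Defs
begin

theorem mainTheorem12:
  fixes X :: "'a topology"
  assumes "regular_space X"
    and "selSS_cd_O_Gamma X"
    and "countable_extent X"
    and "card_less_b (topspace X)"
  shows "sel_strongly_star_Hurewicz X"
  unfolding sel_strongly_star_Hurewicz_def
proof (intro allI impI)
  fix \<U> :: "nat \<Rightarrow> 'a set set" and D :: "nat \<Rightarrow> 'a set"
  assume h: "(\<forall>n. open_cover X (\<U> n)) \<and> (\<forall>n. dense_in X (D n))"
  then obtain C :: "nat \<Rightarrow> _" where C: "\<And>n. C n \<subseteq> D n" "\<And>n. closed_discrete X (C n)"
    and ev: "\<And>x. x\<in>topspace X \<Longrightarrow> \<forall>\<^sub>F n in sequentially. x \<in> star (C n) (\<U> n)"
    using assms(2) h unfolding selSS_cd_O_Gamma_def by (elim allE[of _ \<U>] allE[of _ D]) blast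
  have cnt: "\<And>n. countable (C n)" using C(2) assms(3) unfolding countable_extent_def by blast
  define P where "P x n k \<longleftrightarrow> (\<exists>c\<in>C n. to_nat_on (C n) c = k \<and> (\<exists>U\<in>\<U> n. x \<in> U \<and> c \<in> U))" for x n k
  define f where "f x = (\<lambda>n. if x \<in> star (C n) (\<U> n) then (LEAST k. P x n k) else 0)" for x
  have "\<not> unbounded_family (f ` topspace X)"
  proof
    assume "unbounded_family (f ` topspace X)"
    then have "(card_of (topspace X), card_of (f ` topspace X)) \<in> ordLess"
      using assms(4) unfolding card_less_b_def by blast
    moreover have "(card_of (f ` topspace X), card_of (topspace X)) \<in> ordLeq"
      by (rule card_of_image)
    ultimately show False using not_ordLess_ordLeq by metis
  qed
  then obtain g where g: "\<And>x. x \<in> topspace X \<Longrightarrow> dominated_ae (f x) g"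
    unfolding unbounded_family_def by blast
  define F where "F n = {c \<in> C n. to_nat_on (C n) c \<le> g n}" for n
  show "\<exists>F. (\<forall>n. F n \<subseteq> D n \<and> finite (F n)) \<and>
           (\<forall>x\<in>topspace X. \<forall>\<^sub>F n in sequentially. x \<in> star (F n) (\<U> n))"
  proof (intro exI conjI allI ballI)
    fix n
    show "F n \<subseteq> D n" using C(1) unfolding F_def by blast
    have inj: "inj_on (to_nat_on (C n)) (F n)"
      using inj_on_to_nat_on[OF cnt[of n]] unfolding F_def by (rule inj_on_subset) auto
    have "to_nat_on (C n) ` F n \<subseteq> {..g n}" unfolding F_def by auto
    then have "finite (to_nat_on (C n) ` F n)" by (rule finite_subset) simp
    then show "finite (F n)" using finite_imageD[OF _ inj] by simp
  next
    fix x assume x: "x \<in> topspace X"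
    have "\<forall>\<^sub>F n in sequentially. x \<in> star (C n) (\<U> n) \<and> f x n \<le> g n"
      using ev[OF x] g[OF x] unfolding dominated_ae_def by (rule eventually_conj)
    then show "\<forall>\<^sub>F n in sequentially. x \<in> star (F n) (\<U> n)"
    proof (rule eventually_mono)
      fix n assume a: "x \<in> star (C n) (\<U> n) \<and> f x n \<le> g n"
      then obtain U c where U: "U \<in> \<U> n" "x \<in> U" "c \<in> U" "c \<in> C n"
        unfolding star_def by blast
      have "P x n (to_nat_on (C n) c)" unfolding P_def using U by blast
      then have "P x n (LEAST k. P x n k)" by (rule LeastI)
      then obtain c' U' where c': "c' \<in> C n" "to_nat_on (C n) c' = (LEAST k. P x n k)"
        "U' \<in> \<U> n" "x \<in> U'" "c' \<in> U'" unfolding P_def by blast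
      have "f x n = (LEAST k. P x n k)" using a unfolding f_def by simp
      then have "c' \<in> F n" using a c' unfolding F_def by simp
      then show "x \<in> star (F n) (\<U> n)" unfolding star_def using c' by blast
    qed
  qed
qed

end
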